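(* Let $p$ be a prime, $K\in\{\mathbb Z_{(p)},\mathbb Z_p\}$, $F$ a field containing $K$, $G=\langle a\rangle\cong C_{p^2}$, $\Phi(x)=x^{p-1}+\dots+x+1$, and for $0\leq i\leq p-1$ let $Y_i$ be the $KC_{p^2}$-submodule of $KC_{p^2}$ generated by $\Phi(a)$ and $(a-1)^i$. Then for every $1$-cocycle $T:C_{p^2}\to\widehat{Y_i}$ the group $\mathrm{Crys}(C_{p^2};Y_i;T)$ contains an element of order $p$.
   Context: $FM=F\otimes_KM$, $\widehat M=FM/M$ with $g(x+M)=gx+M$; a $1$-cocycle is $T:G\to\widehat M$ with $T(gh)=gT(h)+T(g)$. $\mathrm{Crys}(G;M;T)=\{(g,x):g\in G,\ x\in FM,\ x+M=T(g)\}$ with $(g,x)(g',x')=(gg',g'x+x')$. *)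

theory Defs
  imports "HOL-Algebra.Multiplicative_Group" "HOL-Library.Function_Algebras" "HOL-Computational_Algebra.Primes"
begin

section \<open>The ring of p-adic integers as an inverse limit of Z/p^n\<close>

definition Zp_carrier :: "nat \<Rightarrow> (nat \<Rightarrow> int) set" where
  "Zp_carrier p = {x. (\<forall>n. 0 \<le> x n \<and> x n < int p ^ n) \<and>
                      (\<forall>n. x (Suc n) mod (int p ^ n) = x n)}"

definition Zp_add :: "nat \<Rightarrow> (nat \<Rightarrow> int) \<Rightarrow> (nat \<Rightarrow> int) \<Rightarrow> (nat \<Rightarrow> int)" where
  "Zp_add p x y = (\<lambda>n. (x n + y n) mod (int p ^ n))"

definition Zp_mult :: "nat \<Rightarrow> (nat \<Rightarrow> int) \<Rightarrow> (nat \<Rightarrow> int) \<Rightarrow> (nat \<Rightarrow> int)" where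
  "Zp_mult p x y = (\<lambda>n. (x n * y n) mod (int p ^ n))"

definition Zp_one :: "nat \<Rightarrow> (nat \<Rightarrow> int)" where
  "Zp_one p = (\<lambda>n. 1 mod (int p ^ n))"

definition Zloc :: "nat \<Rightarrow> rat set" where
  "Zloc p = {r. \<not> int p dvd snd (quotient_of r)}"

section \<open>K is (an isomorphic copy of) a given ring inside the field F\<close>

definition ring_copy_in ::
  "'r set \<Rightarrow> ('r \<Rightarrow> 'r \<Rightarrow> 'r) \<Rightarrow> ('r \<Rightarrow> 'r \<Rightarrow> 'r) \<Rightarrow> 'r \<Rightarrow> 'f::field set \<Rightarrow> bool" where
  "ring_copy_in R ad mu on K \<longleftrightarrow>
     (\<exists>\<phi>. inj_on \<phi> R \<and> \<phi> ` R = K \<and> \<phi> on = 1 \<and>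
          (\<forall>x\<in>R. \<forall>y\<in>R. \<phi> (ad x y) = \<phi> x + \<phi> y \<and> \<phi> (mu x y) = \<phi> x * \<phi> y))"

definition is_Zloc_in :: "nat \<Rightarrow> 'f::field set \<Rightarrow> bool" where
  "is_Zloc_in p K \<longleftrightarrow> ring_copy_in (Zloc p) (+) (*) 1 K"

definition is_Zp_in :: "nat \<Rightarrow> 'f::field set \<Rightarrow> bool" where
  "is_Zp_in p K \<longleftrightarrow> ring_copy_in (Zp_carrier p) (Zp_add p) (Zp_mult p) (Zp_one p) K"

text \<open>An element of F C_n is a coefficient function x :: nat => F supported on {0..<n};
  the coefficient x j belongs to the group element a^j.  Group elements of C_n are
  represented by exponents k < n.\<close>

definition gr_elems :: "nat \<Rightarrow> (nat \<Rightarrow> 'f::field) set" where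
  "gr_elems n = {x. \<forall>j\<ge>n. x j = 0}"

definition gr_act :: "nat \<Rightarrow> nat \<Rightarrow> (nat \<Rightarrow> 'f::field) \<Rightarrow> (nat \<Rightarrow> 'f)" where
  "gr_act n k x = (\<lambda>j. if j < n then x ((j + n - k mod n) mod n) else 0)"

definition gr_mult :: "nat \<Rightarrow> (nat \<Rightarrow> 'f::field) \<Rightarrow> (nat \<Rightarrow> 'f) \<Rightarrow> (nat \<Rightarrow> 'f)" where
  "gr_mult n x y = (\<lambda>j. if j < n then
      (\<Sum>u<n. \<Sum>v<n. if (u + v) mod n = j then x u * y v else 0) else 0)"

definition gr_basis :: "nat \<Rightarrow> nat \<Rightarrow> (nat \<Rightarrow> 'f::field)" where
  "gr_basis n k = (\<lambda>j. if j < n \<and> j = k mod n then 1 else 0)"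

definition gr_pow :: "nat \<Rightarrow> (nat \<Rightarrow> 'f::field) \<Rightarrow> nat \<Rightarrow> (nat \<Rightarrow> 'f)" where
  "gr_pow n x i = (gr_mult n x ^^ i) (gr_basis n 0)"

definition gr_smult :: "'f::field \<Rightarrow> (nat \<Rightarrow> 'f) \<Rightarrow> (nat \<Rightarrow> 'f)" where
  "gr_smult c x = (\<lambda>j. c * x j)"

definition KG :: "nat \<Rightarrow> 'f::field set \<Rightarrow> (nat \<Rightarrow> 'f) set" where
  "KG n K = {x \<in> gr_elems n. \<forall>j. x j \<in> K}"

definition PhiA :: "nat \<Rightarrow> (nat \<Rightarrow> 'f::field)" where
  "PhiA p = (\<Sum>j<p. gr_basis (p^2) j)"

definition Ymod :: "nat \<Rightarrow> 'f::field set \<Rightarrow> nat \<Rightarrow> (nat \<Rightarrow> 'f) set" where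
  "Ymod p K i = {gr_mult (p^2) u (PhiA p) +
                 gr_mult (p^2) v (gr_pow (p^2) (gr_basis (p^2) 1 - gr_basis (p^2) 0) i)
                 | u v. u \<in> KG (p^2) K \<and> v \<in> KG (p^2) K}"

text \<open>FM, realised as the F-span of M inside F C_n (the image of F \<otimes>_K M, which
  embeds since F is flat over the PID K)\<close>
definition Fspan :: "(nat \<Rightarrow> 'f::field) set \<Rightarrow> (nat \<Rightarrow> 'f) set" where
  "Fspan M = {x. \<exists>S c. finite S \<and> S \<subseteq> M \<and> x = (\<Sum>m\<in>S. gr_smult (c m) m)}"

definition coset :: "(nat \<Rightarrow> 'f::field) set \<Rightarrow> (nat \<Rightarrow> 'f) \<Rightarrow> (nat \<Rightarrow> 'f) set" where
  "coset M x = (\<lambda>m. x + m) ` M"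

definition Mhat :: "(nat \<Rightarrow> 'f::field) set \<Rightarrow> (nat \<Rightarrow> 'f) set set" where
  "Mhat M = {coset M x | x. x \<in> Fspan M}"

text \<open>1-cocycle T : C_n -> hat M with T(gh) = g T(h) + T(g); the action on cosets is
  g(x+M) = gx+M and the sum of cosets is the sum of sets.\<close>
definition is_cocycle :: "nat \<Rightarrow> (nat \<Rightarrow> 'f::field) set \<Rightarrow> (nat \<Rightarrow> (nat \<Rightarrow> 'f) set) \<Rightarrow> bool" where
  "is_cocycle n M T \<longleftrightarrow>
     (\<forall>g<n. T g \<in> Mhat M) \<and>
     (\<forall>g<n. \<forall>h<n. T ((g + h) mod n) = {gr_act n g y + z | y z. y \<in> T h \<and> z \<in> T g})"

definition Crys :: "nat \<Rightarrow> (nat \<Rightarrow> 'f::field) set \<Rightarrow> (nat \<Rightarrow> (nat \<Rightarrow> 'f) set)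
                     \<Rightarrow> (nat \<times> (nat \<Rightarrow> 'f)) monoid" where
  "Crys n M T = \<lparr> carrier = {(g, x). g < n \<and> x \<in> Fspan M \<and> coset M x = T g},
                  monoid.mult = (\<lambda>(g, x) (g', x'). ((g + g') mod n, gr_act n g' x + x')),
                  monoid.one = (0, 0) \<rparr>"

end

theory Submission
  imports Defs
begin

lemma key_fwd: "(j::nat) < n \<Longrightarrow> r \<le> n \<Longrightarrow> ((j + n - r) mod n + r) mod n = j"
proof -
  assume a: "j < n" "r \<le> n"
  have "((j + n - r) mod n + r) mod n = (j + n - r + r) mod n" by (simp add: mod_add_left_eq)
  also have "j + n - r + r = j + n" using a by simp
  finally show ?thesis using a by simp
qed

lemma key_uniq0: "(t::nat) < n \<Longrightarrow> t' < n \<Longrightarrow> t \<le> t' \<Longrightarrow> (t + r) mod n = (t' + r) mod n \<Longrightarrow> t = t'"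
proof -
  assume a: "t < n" "t' < n" "t \<le> t'" "(t + r) mod n = (t' + r) mod n"
  then have "n dvd (t' + r) - (t + r)" by (metis add_le_mono1 mod_eq_dvd_iff_nat)
  then have "n dvd t' - t" by simp
  then show ?thesis using a by (metis dvd_imp_le le_antisym less_imp_diff_less not_le zero_less_diff)
qed

lemma key_uniq: "(t::nat) < n \<Longrightarrow> t' < n \<Longrightarrow> (t + r) mod n = (t' + r) mod n \<Longrightarrow> t = t'"
  by (metis key_uniq0 nat_le_linear)

lemma modA: "0 < (n::nat) \<Longrightarrow> j < n \<Longrightarrow> ((j + n - g mod n) mod n + n - h mod n) mod n = (j + n - (h+g) mod n) mod n"
proof -
  assume n: "0 < n" and j: "j < n"
  define A where "A = (j + n - g mod n) mod n"
  define t1 where "t1 = (A + n - h mod n) mod n"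
  define t2 where "t2 = (j + n - (h+g) mod n) mod n"
  have A: "A < n" using n by (simp add: A_def)
  have e1: "(t1 + h mod n) mod n = A" unfolding t1_def using A n by (intro key_fwd) auto
  have e2: "(A + g mod n) mod n = j" unfolding A_def using j n by (intro key_fwd) auto
  have e3: "(t2 + (h+g) mod n) mod n = j" unfolding t2_def using j n by (intro key_fwd) auto
  have "(t1 + (h+g) mod n) mod n = (t1 + (h + g)) mod n" by (rule mod_add_right_eq)
  also have "\<dots> = ((t1 + h) + g) mod n" by (simp only: add.assoc)
  also have "\<dots> = ((t1 + h) mod n + g) mod n" by (rule mod_add_left_eq[symmetric])
  also have "\<dots> = ((t1 + h) mod n + g mod n) mod n" by (rule mod_add_right_eq[symmetric])
  also have "(t1 + h) mod n = A" using e1 by (simp only: mod_add_right_eq)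
  also have "(A + g mod n) mod n = j" by (rule e2)
  finally have "(t1 + (h+g) mod n) mod n = (t2 + (h+g) mod n) mod n" using e3 by simp
  moreover have "t1 < n" unfolding t1_def using n by (rule mod_less_divisor)
  moreover have "t2 < n" unfolding t2_def using n by (rule mod_less_divisor)
  ultimately have "t1 = t2" using key_uniq by blast
  then show ?thesis unfolding t1_def t2_def A_def .
qed

lemma modB: "(j::nat) < n \<Longrightarrow> t < n \<Longrightarrow> (j + n - (j + n - t) mod n) mod n = t"
proof (cases "t \<le> j")
  case True
  assume a: "j < n" "t < n"
  have eq: "j + n - t = (j - t) + n" using True by simp
  have "(j + n - t) mod n = ((j - t) + n) mod n" by (simp only: eq)
  also have "\<dots> = j - t" using a by (simp only: mod_add_self2) simp
  finally have "(j + n - t) mod n = j - t" .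
  moreover have "j + n - (j - t) = t + n" using True a by simp
  ultimately show ?thesis using a by simp
next
  case False
  assume a: "j < n" "t < n"
  have "(j + n - t) mod n = j + n - t" using False a by simp
  moreover have "j + n - (j + n - t) = t" using False a by simp
  ultimately show ?thesis using a by simp
qed

lemma modC: "(t::nat) < n \<Longrightarrow> l < n \<Longrightarrow> ((t + n - l) mod n = 0) = (t = l)"
proof (cases "l \<le> t")
  case True
  assume a: "t < n" "l < n"
  have eq: "t + n - l = (t - l) + n" using True by simp
  have "(t + n - l) mod n = ((t - l) + n) mod n" by (simp only: eq)
  also have "\<dots> = t - l" using a by (simp only: mod_add_self2) simp
  finally have "(t + n - l) mod n = t - l" .
  then show ?thesis using True by simp
next
  case False
  assume a: "t < n" "l < n"
  have "(t + n - l) mod n = t + n - l" using False a by simp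
  then show ?thesis using False a by simp
qed

lemma sum_fun_apply: "(\<Sum>i\<in>A. f i) x = (\<Sum>i\<in>A. f i x)"
  by (induction A rule: infinite_finite_induct) auto

lemma gr_act_mod: "gr_act n (k mod n) x = gr_act n k x"
  unfolding gr_act_def by (rule ext) simp

lemma gr_act_comp: "0 < n \<Longrightarrow> gr_act n g (gr_act n h x) = gr_act n (h + g) x"
  by (rule ext) (simp add: gr_act_def modA)

lemma gr_act_0: "x \<in> gr_elems n \<Longrightarrow> gr_act n 0 x = x"
  by (rule ext) (auto simp: gr_act_def gr_elems_def)

lemma gr_act_in: "gr_act n k x \<in> gr_elems n"
  by (simp add: gr_act_def gr_elems_def)

lemma gr_act_add: "gr_act n k (x + y) = gr_act n k x + gr_act n k y"
  by (rule ext) (simp add: gr_act_def)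

lemma gr_act_diff: "gr_act n k (x - y) = gr_act n k x - gr_act n k y"
  by (rule ext) (simp add: gr_act_def)

lemma gr_act_minus: "gr_act n k (- x) = - gr_act n k x"
  by (rule ext) (simp add: gr_act_def)

lemma gr_act_zero: "gr_act n k 0 = 0"
  by (rule ext) (simp add: gr_act_def)

lemma gr_act_sum: "gr_act n k (\<Sum>i\<in>A. f i) = (\<Sum>i\<in>A. gr_act n k (f i))"
  by (rule ext) (simp add: gr_act_def sum_fun_apply)

lemma gr_elems_sum: "(\<And>i. i \<in> A \<Longrightarrow> f i \<in> gr_elems n) \<Longrightarrow> (\<Sum>i\<in>A. f i) \<in> gr_elems n"
  by (induction A rule: infinite_finite_induct) (auto simp: gr_elems_def)

lemma gr_act_N: "(\<Sum>t<n. gr_act n t z) j = (if j < n then (\<Sum>s<n. z s) else 0)"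
proof (cases "j < n")
  case True
  have "(\<Sum>t<n. gr_act n t z) j = (\<Sum>t<n. z ((j + n - t) mod n))"
    using True by (simp add: sum_fun_apply gr_act_def)
  also have "\<dots> = (\<Sum>s<n. z s)"
    by (rule sum.reindex_bij_witness[where i="\<lambda>s. (j + n - s) mod n" and j="\<lambda>s. (j + n - s) mod n"])
       (use True in \<open>auto simp: modB\<close>)
  finally show ?thesis using True by simp
next
  case False
  then show ?thesis by (simp add: sum_fun_apply gr_act_def)
qed

lemma block_sum:
  assumes "0 < p"
  shows "(\<Sum>j<p. gr_act (p*p) (j*p) (\<Sum>l<p. gr_act (p*p) l z)) = (\<Sum>t<p*p. gr_act (p*p) t z)"
proof -
  have pp: "0 < p*p" using assms by simp
  have "(\<Sum>j<p. gr_act (p*p) (j*p) (\<Sum>l<p. gr_act (p*p) l z)) = (\<Sum>j<p. \<Sum>l<p. gr_act (p*p) (l + j*p) z)"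
    by (simp add: gr_act_sum gr_act_comp[OF pp])
  also have "\<dots> = (\<Sum>j<p. sum (\<lambda>t. gr_act (p*p) t z) {j*p..<j*p+p})"
  proof (rule sum.cong[OF refl])
    fix j
    have "sum (\<lambda>t. gr_act (p*p) t z) {0 + j*p..<p + j*p} = (\<Sum>l\<in>{0..<p}. gr_act (p*p) (l + j*p) z)"
      by (rule sum.shift_bounds_nat_ivl)
    then show "(\<Sum>l<p. gr_act (p*p) (l + j*p) z) = sum (\<lambda>t. gr_act (p*p) t z) {j*p..<j*p+p}"
      by (simp add: atLeast0LessThan add.commute)
  qed
  also have "\<dots> = (\<Sum>t<p*p. gr_act (p*p) t z)" by (rule sum.nat_group)
  finally show ?thesis .
qed

definition subr :: "'f::field set \<Rightarrow> bool" where
  "subr K \<longleftrightarrow> 0 \<in> K \<and> 1 \<in> K \<and> -1 \<in> K \<and> (\<forall>a\<in>K. \<forall>b\<in>K. a + b \<in> K \<and> a * b \<in> K)"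

lemma copy_subr:
  assumes "ring_copy_in R ad mu on K" "z \<in> R" "on \<in> R" "ng \<in> R" "ad z z = z" "ad ng on = z"
    and cl: "\<And>x y. x \<in> R \<Longrightarrow> y \<in> R \<Longrightarrow> ad x y \<in> R \<and> mu x y \<in> R"
  shows "subr K"
proof -
  obtain \<phi> where ph: "\<phi> ` R = K" "\<phi> on = 1"
    "\<And>x y. x \<in> R \<Longrightarrow> y \<in> R \<Longrightarrow> \<phi> (ad x y) = \<phi> x + \<phi> y \<and> \<phi> (mu x y) = \<phi> x * \<phi> y"
    using assms(1) unfolding ring_copy_in_def by blast
  have "\<phi> z = \<phi> z + \<phi> z" using ph(3)[OF assms(2) assms(2)] assms(5) by simp
  then have z0: "\<phi> z = 0" by (metis add_cancel_right_right)
  have "\<phi> ng + 1 = 0" using ph(3)[OF assms(4) assms(3)] assms(6) z0 ph(2) by simp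
  then have n1: "\<phi> ng = -1" by (simp add: eq_neg_iff_add_eq_0)
  have "0 \<in> K" using z0 assms(2) ph(1) by force
  moreover have "1 \<in> K" using ph(2) assms(3) ph(1) by force
  moreover have "-1 \<in> K" using n1 assms(4) ph(1) by force
  moreover have "\<forall>a\<in>K. \<forall>b\<in>K. a + b \<in> K \<and> a * b \<in> K"
  proof (intro ballI)
    fix a b assume "a \<in> K" "b \<in> K"
    then obtain x y where xy: "x \<in> R" "y \<in> R" "a = \<phi> x" "b = \<phi> y" using ph(1) by blast
    have "a + b = \<phi> (ad x y)" "a * b = \<phi> (mu x y)" using ph(3)[OF xy(1,2)] xy by auto
    then show "a + b \<in> K \<and> a * b \<in> K" using cl[OF xy(1,2)] ph(1) by blast
  qed
  ultimately show ?thesis unfolding subr_def by blast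
qed

lemma denom_dvd:
  assumes "quotient_of r = (a', b')" "r = of_int a / of_int b" "b \<noteq> 0"
  shows "b' dvd b"
proof -
  have r: "r = of_int a' / of_int b'" using quotient_of_div[OF assms(1)] .
  have b'0: "b' > 0" using quotient_of_denom_pos[OF assms(1)] .
  have cop: "coprime a' b'" using quotient_of_coprime[OF assms(1)] .
  have "(of_int a' :: rat) / of_int b' = of_int a / of_int b" using r assms(2) by simp
  then have "(of_int a' :: rat) * of_int b = of_int a * of_int b'" using b'0 assms(3)
    by (simp add: frac_eq_eq)
  then have "a' * b = a * b'" by (metis of_int_eq_iff of_int_mult)
  then have "b' dvd a' * b" by (metis dvd_triv_right)
  then show ?thesis using cop by (metis coprime_commute coprime_dvd_mult_right_iff)
qed

lemma Zloc_char: "r \<in> Zloc p \<longleftrightarrow> (\<exists>a b. b \<noteq> 0 \<and> \<not> int p dvd b \<and> r = of_int a / of_int b)"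
proof
  assume "r \<in> Zloc p"
  then show "\<exists>a b. b \<noteq> 0 \<and> \<not> int p dvd b \<and> r = of_int a / of_int b"
    unfolding Zloc_def
    by (metis (mono_tags, lifting) mem_Collect_eq prod.collapse quotient_of_denom_pos' quotient_of_div less_irrefl)
next
  assume "\<exists>a b. b \<noteq> 0 \<and> \<not> int p dvd b \<and> r = of_int a / of_int b"
  then obtain a b where ab: "b \<noteq> 0" "\<not> int p dvd b" "r = of_int a / of_int b" by blast
  obtain a' b' where q: "quotient_of r = (a', b')" by (cases "quotient_of r")
  have "b' dvd b" using denom_dvd[OF q ab(3) ab(1)] .
  then have "\<not> int p dvd b'" using ab(2) dvd_trans by blast
  then show "r \<in> Zloc p" unfolding Zloc_def using q by simp
qed

lemma Zloc_subr:
  assumes "prime p" "is_Zloc_in p K"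
  shows "subr K"
proof -
  have pr: "prime (int p)" using assms(1) by simp
  have mem: "of_int a / of_int b \<in> Zloc p" if "b \<noteq> 0" "\<not> int p dvd b" for a b
    using that Zloc_char by blast
  have nd: "\<not> int p dvd 1" using pr not_prime_unit by blast
  have "of_int 0 / of_int 1 \<in> Zloc p" "of_int 1 / of_int 1 \<in> Zloc p" "of_int (-1) / of_int 1 \<in> Zloc p"
    by (rule mem; use nd in simp)+
  then have z: "0 \<in> Zloc p" and o: "1 \<in> Zloc p" and ng: "-1 \<in> Zloc p" by simp_all
  have cl: "x + y \<in> Zloc p \<and> x * y \<in> Zloc p" if "x \<in> Zloc p" "y \<in> Zloc p" for x y
  proof -
    from that(1)[unfolded Zloc_char] obtain a b where ab: "b \<noteq> 0" "\<not> int p dvd b" "x = of_int a / of_int b" by blast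
    from that(2)[unfolded Zloc_char] obtain c d where cd: "d \<noteq> 0" "\<not> int p dvd d" "y = of_int c / of_int d" by blast
    have bd: "b * d \<noteq> 0" "\<not> int p dvd b * d" using ab cd pr by (simp_all add: prime_dvd_mult_iff)
    have "x + y = of_int (a * d + c * b) / of_int (b * d)" using ab cd by (simp add: add_frac_eq)
    moreover have "x * y = of_int (a * c) / of_int (b * d)" using ab cd by simp
    ultimately show ?thesis using mem[OF bd] by metis
  qed
  show ?thesis
    by (rule copy_subr[where R="Zloc p" and ad="(+)" and mu="(*)" and z=0 and on=1 and ng="-1"])
       (use assms(2) z o ng cl in \<open>auto simp: is_Zloc_in_def\<close>)
qed

lemma Zp_subr:
  assumes "prime p" "is_Zp_in p K"
  shows "subr K"
proof -
  have p0: "(0::int) < int p" using assms(1) prime_gt_0_nat by simp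
  have pn: "(0::int) < int p ^ n" for n using p0 by simp
  have dv: "int p ^ n dvd int p ^ Suc n" for n by simp
  have z: "(\<lambda>n. 0) \<in> Zp_carrier p" unfolding Zp_carrier_def using pn by simp
  have o: "Zp_one p \<in> Zp_carrier p" unfolding Zp_carrier_def Zp_one_def using pn dv
    by (auto simp: mod_mod_cancel)
  have ngm: "(int p ^ Suc n - 1) mod int p ^ n = int p ^ n - 1" for n
  proof -
    have "(int p ^ Suc n - 1) mod int p ^ n = (int p ^ n * int p - 1) mod int p ^ n" by (simp add: mult.commute)
    also have "\<dots> = (- 1) mod int p ^ n" by (simp add: mod_diff_left_eq[symmetric])
    also have "\<dots> = int p ^ n - 1" using pn[of n] by (simp add: zmod_minus1)
    finally show ?thesis .
  qed
  have ng: "(\<lambda>n. int p ^ n - 1) \<in> Zp_carrier p" unfolding Zp_carrier_def using pn ngm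
    by (auto simp: int_one_le_iff_zero_less)
  have zz: "Zp_add p (\<lambda>n. 0) (\<lambda>n. 0) = (\<lambda>n. 0)" unfolding Zp_add_def by simp
  have no: "Zp_add p (\<lambda>n. int p ^ n - 1) (Zp_one p) = (\<lambda>n. 0)"
    unfolding Zp_add_def Zp_one_def by (rule ext) (simp add: mod_add_right_eq)
  have cl: "Zp_add p x y \<in> Zp_carrier p \<and> Zp_mult p x y \<in> Zp_carrier p"
    if "x \<in> Zp_carrier p" "y \<in> Zp_carrier p" for x y
  proof -
    have cx: "x (Suc n) mod int p ^ n = x n" "y (Suc n) mod int p ^ n = y n" for n
      using that unfolding Zp_carrier_def by auto
    have a: "(x (Suc n) + y (Suc n)) mod int p ^ Suc n mod int p ^ n = (x n + y n) mod int p ^ n" for n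
      using cx[of n] dv[of n] by (metis mod_add_eq mod_mod_cancel)
    have m: "(x (Suc n) * y (Suc n)) mod int p ^ Suc n mod int p ^ n = (x n * y n) mod int p ^ n" for n
      using cx[of n] dv[of n] by (metis mod_mult_eq mod_mod_cancel)
    show ?thesis unfolding Zp_carrier_def Zp_add_def Zp_mult_def using a m pn by simp
  qed
  show ?thesis
    by (rule copy_subr[where R="Zp_carrier p" and ad="Zp_add p" and mu="Zp_mult p" and z="\<lambda>n. 0" and on="Zp_one p" and ng="\<lambda>n. int p ^ n - 1"])
       (use assms(2) z o ng zz no cl in \<open>auto simp: is_Zp_in_def\<close>)
qed

lemma subr_sum: "subr K \<Longrightarrow> (\<And>i. i \<in> A \<Longrightarrow> f i \<in> K) \<Longrightarrow> sum f A \<in> K"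
  by (induction A rule: infinite_finite_induct) (auto simp: subr_def)

lemma subr_neg: "subr K \<Longrightarrow> a \<in> K \<Longrightarrow> - a \<in> K"
  unfolding subr_def by (metis mult_minus1)

lemma KG_zero: "subr K \<Longrightarrow> 0 \<in> KG n K"
  by (simp add: KG_def gr_elems_def subr_def)

lemma KG_add: "subr K \<Longrightarrow> u \<in> KG n K \<Longrightarrow> v \<in> KG n K \<Longrightarrow> u + v \<in> KG n K"
  by (simp add: KG_def gr_elems_def subr_def)

lemma KG_neg: "subr K \<Longrightarrow> u \<in> KG n K \<Longrightarrow> - u \<in> KG n K"
  by (simp add: KG_def gr_elems_def subr_neg)

lemma KG_diff: "subr K \<Longrightarrow> u \<in> KG n K \<Longrightarrow> v \<in> KG n K \<Longrightarrow> u - v \<in> KG n K"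
  using KG_add[of K u n "- v"] KG_neg[of K v n] by simp

lemma KG_sum: "subr K \<Longrightarrow> (\<And>i. i \<in> A \<Longrightarrow> f i \<in> KG n K) \<Longrightarrow> sum f A \<in> KG n K"
  by (induction A rule: infinite_finite_induct) (auto simp: KG_zero KG_add)

lemma KG_basis: "subr K \<Longrightarrow> gr_basis n k \<in> KG n K"
  by (simp add: KG_def gr_elems_def gr_basis_def subr_def)

lemma KG_mult: "subr K \<Longrightarrow> u \<in> KG n K \<Longrightarrow> y \<in> KG n K \<Longrightarrow> gr_mult n u y \<in> KG n K"
  unfolding KG_def gr_elems_def gr_mult_def
  by (auto intro!: subr_sum) (auto simp: subr_def)

lemma KG_pow: "subr K \<Longrightarrow> x \<in> KG n K \<Longrightarrow> gr_pow n x i \<in> KG n K"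
  unfolding gr_pow_def by (induction i) (auto simp: KG_basis KG_mult)

lemma gr_mult_add: "gr_mult n (u + v) y = gr_mult n u y + gr_mult n v y"
  unfolding gr_mult_def
  by (rule ext) (simp add: sum.distrib[symmetric] distrib_right if_distrib cong: if_cong)

lemma gr_mult_neg: "gr_mult n (- u) y = - gr_mult n u y"
  unfolding gr_mult_def
  by (rule ext) (simp add: sum_negf[symmetric] if_distrib cong: if_cong)

lemma gr_mult_zero: "gr_mult n 0 y = 0"
  unfolding gr_mult_def by (rule ext) (simp add: zero_fun_apply cong: if_cong)

abbreviation PP :: "nat \<Rightarrow> nat \<Rightarrow> (nat \<Rightarrow> 'f::field)" where
  "PP p i \<equiv> gr_pow (p^2) (gr_basis (p^2) 1 - gr_basis (p^2) 0) i"

lemma Ymod_KG: "subr K \<Longrightarrow> Ymod p K i \<subseteq> KG (p^2) K"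
proof
  fix x assume K: "subr K" and "x \<in> Ymod p K i"
  then obtain u v where uv: "u \<in> KG (p^2) K" "v \<in> KG (p^2) K"
    "x = gr_mult (p^2) u (PhiA p) + gr_mult (p^2) v (PP p i)"
    unfolding Ymod_def by blast
  have "PhiA p \<in> KG (p^2) K" unfolding PhiA_def using K by (intro KG_sum KG_basis)
  moreover have "PP p i \<in> KG (p^2) K" using K by (intro KG_pow KG_diff KG_basis)
  ultimately show "x \<in> KG (p^2) K" using uv K by (simp add: KG_add KG_mult)
qed

lemma Ymod_zero: "subr K \<Longrightarrow> 0 \<in> Ymod p K i"
  unfolding Ymod_def using KG_zero[of K "p^2"] by (force simp: gr_mult_zero)

lemma Ymod_add: "subr K \<Longrightarrow> x \<in> Ymod p K i \<Longrightarrow> y \<in> Ymod p K i \<Longrightarrow> x + y \<in> Ymod p K i"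
proof -
  assume K: "subr K" and x: "x \<in> Ymod p K i" and y: "y \<in> Ymod p K i"
  from x obtain u v where uv: "u \<in> KG (p^2) K" "v \<in> KG (p^2) K"
    "x = gr_mult (p^2) u (PhiA p) + gr_mult (p^2) v (PP p i)"
    unfolding Ymod_def by blast
  from y obtain u' v' where uv': "u' \<in> KG (p^2) K" "v' \<in> KG (p^2) K"
    "y = gr_mult (p^2) u' (PhiA p) + gr_mult (p^2) v' (PP p i)"
    unfolding Ymod_def by blast
  have "x + y = gr_mult (p^2) (u + u') (PhiA p) + gr_mult (p^2) (v + v') (PP p i)"
    using uv uv' by (simp add: gr_mult_add algebra_simps)
  moreover have "u + u' \<in> KG (p^2) K" "v + v' \<in> KG (p^2) K" using K uv uv' by (simp_all add: KG_add)
  ultimately show ?thesis unfolding Ymod_def by blast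
qed

lemma Ymod_neg: "subr K \<Longrightarrow> x \<in> Ymod p K i \<Longrightarrow> - x \<in> Ymod p K i"
proof -
  assume K: "subr K" and x: "x \<in> Ymod p K i"
  from x obtain u v where uv: "u \<in> KG (p^2) K" "v \<in> KG (p^2) K"
    "x = gr_mult (p^2) u (PhiA p) + gr_mult (p^2) v (PP p i)"
    unfolding Ymod_def by blast
  have "- x = gr_mult (p^2) (- u) (PhiA p) + gr_mult (p^2) (- v) (PP p i)"
    using uv by (simp add: gr_mult_neg algebra_simps)
  moreover have "- u \<in> KG (p^2) K" "- v \<in> KG (p^2) K" using K uv by (simp_all add: KG_neg)
  ultimately show ?thesis unfolding Ymod_def by blast
qed

lemma PhiA_val: "1 < p \<Longrightarrow> (PhiA p :: nat \<Rightarrow> 'f::field) j = (if j < p then 1 else 0)"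
proof -
  assume p: "1 < p"
  have pl: "p < p^2" using p by (simp add: power2_eq_square)
  have "(PhiA p :: nat \<Rightarrow> 'f) j = (\<Sum>k<p. (if j < p^2 \<and> j = k mod p^2 then 1 else 0))"
    unfolding PhiA_def gr_basis_def by (simp add: sum_fun_apply)
  also have "\<dots> = (\<Sum>k<p. (if j = k then 1 else 0))"
    by (rule sum.cong[OF refl]) (use pl in auto)
  also have "\<dots> = (if j < p then 1 else 0)" by simp
  finally show ?thesis .
qed

lemma mult_e_Phi:
  assumes "1 < p"
  shows "gr_mult (p^2) (\<lambda>j. if j = 0 then c else 0) (PhiA p) = (\<lambda>j. if j < p then (c::'f::field) else 0)"
proof (rule ext)
  fix j
  have pl: "p < p^2" using assms by (simp add: power2_eq_square)
  show "gr_mult (p^2) (\<lambda>j. if j = 0 then c else 0) (PhiA p) j = (if j < p then c else 0)"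
  proof (cases "j < p^2")
    case True
    have "gr_mult (p^2) (\<lambda>j. if j = 0 then c else 0) (PhiA p) j =
      (\<Sum>a<p^2. \<Sum>b<p^2. if (a + b) mod p^2 = j then (if a = 0 then c else 0) * PhiA p b else 0)"
      using True by (simp add: gr_mult_def)
    also have "\<dots> = (\<Sum>a<p^2. if a = 0 then (\<Sum>b<p^2. if b = j then c * PhiA p b else 0) else 0)"
      by (rule sum.cong[OF refl]) (auto intro!: sum.cong cong: if_cong)
    also have "\<dots> = c * PhiA p j" using True pl assms by simp
    also have "\<dots> = (if j < p then c else 0)" by (simp add: PhiA_val[OF assms])
    finally show ?thesis .
  next
    case False
    then show ?thesis using pl by (simp add: gr_mult_def)
  qed
qed

lemma m_in_Ymod:
  assumes "subr K" "1 < p" "c \<in> K"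
  shows "(\<lambda>j. if j < p then c else 0) \<in> Ymod p K i"
proof -
  have e: "(\<lambda>j. if j = 0 then c else 0) \<in> KG (p^2) K"
    using assms by (auto simp: KG_def gr_elems_def subr_def)
  have "(\<lambda>j. if j < p then c else 0) = gr_mult (p^2) (\<lambda>j. if j = 0 then c else 0) (PhiA p) + gr_mult (p^2) 0 (PP p i)"
    by (simp add: gr_mult_zero mult_e_Phi[OF assms(2)])
  then show ?thesis unfolding Ymod_def using e KG_zero[OF assms(1)] by blast
qed

locale crys_setup =
  fixes n :: nat and M :: "(nat \<Rightarrow> 'f::field) set" and T :: "nat \<Rightarrow> (nat \<Rightarrow> 'f) set"
  assumes npos: "0 < n" and M0: "0 \<in> M" and Madd: "\<And>a b. a \<in> M \<Longrightarrow> b \<in> M \<Longrightarrow> a + b \<in> M"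
    and Mneg: "\<And>a. a \<in> M \<Longrightarrow> - a \<in> M" and Mel: "\<And>a. a \<in> M \<Longrightarrow> a \<in> gr_elems n"
    and coc: "is_cocycle n M T"
begin

lemma Mdiff: "a \<in> M \<Longrightarrow> b \<in> M \<Longrightarrow> a - b \<in> M"
  using Madd[of a "- b"] Mneg[of b] by simp

lemma coset_shift: "d \<in> M \<Longrightarrow> coset M (y + d) = coset M y"
proof -
  assume d: "d \<in> M"
  show ?thesis
  proof
    show "coset M (y + d) \<subseteq> coset M y"
    proof
      fix x assume "x \<in> coset M (y + d)"
      then obtain m where m: "m \<in> M" "x = y + d + m" unfolding coset_def by blast
      then have "x = y + (d + m)" by (simp add: add.assoc)
      then show "x \<in> coset M y" unfolding coset_def using Madd[OF d m(1)] by blast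
    qed
  next
    show "coset M y \<subseteq> coset M (y + d)"
    proof
      fix x assume "x \<in> coset M y"
      then obtain m where m: "m \<in> M" "x = y + m" unfolding coset_def by blast
      then have "x = (y + d) + (m - d)" by simp
      then show "x \<in> coset M (y + d)" unfolding coset_def using Mdiff[OF m(1) d] by blast
    qed
  qed
qed

lemma Fspan_smult: "m \<in> M \<Longrightarrow> gr_smult c m \<in> Fspan M"
  unfolding Fspan_def by (rule CollectI, rule exI[of _ "{m}"], rule exI[of _ "\<lambda>_. c"]) simp

lemma M_Fspan: "m \<in> M \<Longrightarrow> m \<in> Fspan M"
  using Fspan_smult[of m 1] by (simp add: gr_smult_def)

lemma Fspan_add: "x \<in> Fspan M \<Longrightarrow> y \<in> Fspan M \<Longrightarrow> x + y \<in> Fspan M"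
proof -
  assume "x \<in> Fspan M" "y \<in> Fspan M"
  then obtain S1 c1 S2 c2 where s: "finite S1" "S1 \<subseteq> M" "x = (\<Sum>m\<in>S1. gr_smult (c1 m) m)"
    "finite S2" "S2 \<subseteq> M" "y = (\<Sum>m\<in>S2. gr_smult (c2 m) m)"
    unfolding Fspan_def by blast
  define d1 where "d1 m = (if m \<in> S1 then c1 m else 0)" for m
  define d2 where "d2 m = (if m \<in> S2 then c2 m else 0)" for m
  have z: "gr_smult 0 m = 0" for m :: "nat \<Rightarrow> 'f" by (rule ext) (simp add: gr_smult_def)
  have ad: "gr_smult (a + b) m = gr_smult a m + gr_smult b m" for a b and m :: "nat \<Rightarrow> 'f"
    by (rule ext) (simp add: gr_smult_def distrib_right)
  have fin: "finite (S1 \<union> S2)" using s by simp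
  have "x = (\<Sum>m\<in>S1 \<union> S2. gr_smult (d1 m) m)"
    unfolding s(3)
  proof (rule sum.mono_neutral_cong_left[OF fin])
    show "S1 \<subseteq> S1 \<union> S2" by blast
    show "\<forall>i\<in>S1 \<union> S2 - S1. gr_smult (d1 i) i = 0" by (simp add: d1_def z)
    show "\<And>m. m \<in> S1 \<Longrightarrow> gr_smult (c1 m) m = gr_smult (d1 m) m" by (simp add: d1_def)
  qed
  moreover have "y = (\<Sum>m\<in>S1 \<union> S2. gr_smult (d2 m) m)"
    unfolding s(6)
  proof (rule sum.mono_neutral_cong_left[OF fin])
    show "S2 \<subseteq> S1 \<union> S2" by blast
    show "\<forall>i\<in>S1 \<union> S2 - S2. gr_smult (d2 i) i = 0" by (simp add: d2_def z)
    show "\<And>m. m \<in> S2 \<Longrightarrow> gr_smult (c2 m) m = gr_smult (d2 m) m" by (simp add: d2_def)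
  qed
  ultimately have "x + y = (\<Sum>m\<in>S1 \<union> S2. gr_smult (d1 m + d2 m) m)"
    by (simp only: ad sum.distrib)
  moreover have "S1 \<union> S2 \<subseteq> M" using s by blast
  ultimately show ?thesis unfolding Fspan_def using fin
    by (intro CollectI exI[of _ "S1 \<union> S2"] exI[of _ "\<lambda>m. d1 m + d2 m"]) simp
qed

lemma Fspan_el: "x \<in> Fspan M \<Longrightarrow> x \<in> gr_elems n"
proof -
  assume "x \<in> Fspan M"
  then obtain S c where s: "finite S" "S \<subseteq> M" "x = (\<Sum>m\<in>S. gr_smult (c m) m)"
    unfolding Fspan_def by blast
  show ?thesis unfolding s(3)
    by (rule gr_elems_sum) (use s Mel in \<open>auto simp: gr_elems_def gr_smult_def\<close>)
qed

lemma T_rep: "g < n \<Longrightarrow> \<exists>y\<in>Fspan M. T g = coset M y"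
  using coc unfolding is_cocycle_def Mhat_def by blast

lemma coset_mem: "x \<in> coset M y \<Longrightarrow> \<exists>m\<in>M. x = y + m"
  unfolding coset_def by blast

lemma T_props: "g < n \<Longrightarrow> x \<in> T g \<Longrightarrow> coset M x = T g \<and> x \<in> Fspan M"
proof -
  assume g: "g < n" "x \<in> T g"
  obtain y where y: "y \<in> Fspan M" "T g = coset M y" using T_rep[OF g(1)] by blast
  obtain m where m: "m \<in> M" "x = y + m" using coset_mem g(2) y(2) by blast
  show ?thesis using coset_shift[OF m(1), of y] y m Fspan_add[OF y(1) M_Fspan[OF m(1)]] by simp
qed

lemma T_nonempty: "g < n \<Longrightarrow> \<exists>x. x \<in> T g"
proof -
  assume "g < n"
  then obtain y where "T g = coset M y" using T_rep by blast
  then have "y \<in> T g" unfolding coset_def using M0 by force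
  then show ?thesis by blast
qed

lemma T_shift: "g < n \<Longrightarrow> x \<in> T g \<Longrightarrow> d \<in> M \<Longrightarrow> x + d \<in> T g"
proof -
  assume a: "g < n" "x \<in> T g" "d \<in> M"
  have "x + d \<in> coset M x" unfolding coset_def using a(3) by blast
  then show ?thesis using T_props[OF a(1,2)] by simp
qed

lemma T_diff: "g < n \<Longrightarrow> x \<in> T g \<Longrightarrow> x' \<in> T g \<Longrightarrow> x' - x \<in> M"
proof -
  assume a: "g < n" "x \<in> T g" "x' \<in> T g"
  have "x' \<in> coset M x" using T_props[OF a(1,2)] a(3) by simp
  then obtain m where "m \<in> M" "x' = x + m" using coset_mem by blast
  then show ?thesis by simp
qed

lemma T_coc: "g < n \<Longrightarrow> h < n \<Longrightarrow> x \<in> T h \<Longrightarrow> z \<in> T g \<Longrightarrow> gr_act n g x + z \<in> T ((g + h) mod n)"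
  using coc unfolding is_cocycle_def by blast

lemma T0_sub: "x \<in> T 0 \<Longrightarrow> x \<in> gr_elems n \<Longrightarrow> x \<in> M"
proof -
  assume a: "x \<in> T 0" "x \<in> gr_elems n"
  have "gr_act n 0 x + x \<in> T ((0 + 0) mod n)" by (rule T_coc) (use npos a in auto)
  then have "x + x \<in> T 0" using gr_act_0[OF a(2)] by simp
  then have "(x + x) - x \<in> M" using T_diff[OF npos a(1)] by blast
  then show ?thesis by simp
qed

lemma zero_T0: "0 \<in> T 0"
proof -
  obtain y where y: "y \<in> T 0" using T_nonempty[OF npos] by blast
  have "y \<in> gr_elems n" using T_props[OF npos y] Fspan_el by blast
  then have "y \<in> M" using T0_sub y by blast
  then have "y + (- y) \<in> T 0" using T_shift[OF npos y] Mneg by blast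
  then show ?thesis by simp
qed

lemma carrier_iff: "(g, x) \<in> carrier (Crys n M T) \<longleftrightarrow> g < n \<and> x \<in> T g"
proof
  assume "(g, x) \<in> carrier (Crys n M T)"
  then have "g < n" "coset M x = T g" unfolding Crys_def by auto
  moreover have "x \<in> coset M x" unfolding coset_def using M0 by force
  ultimately show "g < n \<and> x \<in> T g" by simp
next
  assume "g < n \<and> x \<in> T g"
  then show "(g, x) \<in> carrier (Crys n M T)" using T_props unfolding Crys_def by auto
qed

lemma crys_mult: "(g, x) \<otimes>\<^bsub>Crys n M T\<^esub> (g', x') = ((g + g') mod n, gr_act n g' x + x')"
  by (simp add: Crys_def)

lemma crys_one: "\<one>\<^bsub>Crys n M T\<^esub> = (0, 0)"
  by (simp add: Crys_def)

lemma crys_group: "group (Crys n M T)"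
proof (rule groupI)
  fix a b assume a: "a \<in> carrier (Crys n M T)" and b: "b \<in> carrier (Crys n M T)"
  obtain g x where ax: "a = (g, x)" by (cases a)
  obtain g' x' where bx: "b = (g', x')" by (cases b)
  have h: "g < n" "x \<in> T g" "g' < n" "x' \<in> T g'" using a b ax bx carrier_iff by auto
  have "gr_act n g' x + x' \<in> T ((g' + g) mod n)" using T_coc h by blast
  then show "a \<otimes>\<^bsub>Crys n M T\<^esub> b \<in> carrier (Crys n M T)"
    unfolding ax bx crys_mult carrier_iff using npos by (simp add: add.commute)
next
  show "\<one>\<^bsub>Crys n M T\<^esub> \<in> carrier (Crys n M T)"
    unfolding crys_one carrier_iff using npos zero_T0 by simp
next
  fix a b c assume "a \<in> carrier (Crys n M T)" "b \<in> carrier (Crys n M T)" "c \<in> carrier (Crys n M T)"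
  obtain g x where ax: "a = (g, x)" by (cases a)
  obtain g' x' where bx: "b = (g', x')" by (cases b)
  obtain g'' x'' where cx: "c = (g'', x'')" by (cases c)
  have "gr_act n g'' (gr_act n g' x) = gr_act n ((g' + g'') mod n) x"
    using gr_act_comp[OF npos] gr_act_mod by (metis add.commute)
  then show "a \<otimes>\<^bsub>Crys n M T\<^esub> b \<otimes>\<^bsub>Crys n M T\<^esub> c = a \<otimes>\<^bsub>Crys n M T\<^esub> (b \<otimes>\<^bsub>Crys n M T\<^esub> c)"
    unfolding ax bx cx crys_mult by (simp add: gr_act_add mod_simps add.assoc)
next
  fix a assume a: "a \<in> carrier (Crys n M T)"
  obtain g x where ax: "a = (g, x)" by (cases a)
  have "g < n" using a ax carrier_iff by auto
  then show "\<one>\<^bsub>Crys n M T\<^esub> \<otimes>\<^bsub>Crys n M T\<^esub> a = a"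
    unfolding ax crys_one crys_mult by (simp add: gr_act_zero)
next
  fix a assume a: "a \<in> carrier (Crys n M T)"
  obtain g x where ax: "a = (g, x)" by (cases a)
  have h: "g < n" "x \<in> T g" using a ax carrier_iff by auto
  define k where "k = (n - g) mod n"
  have k1: "k < n" unfolding k_def using npos by simp
  have k2: "(k + g) mod n = 0" unfolding k_def using h(1) by (simp add: mod_add_left_eq)
  have k: "k < n" "(k + g) mod n = 0" "(g + k) mod n = 0" using k1 k2 by (simp_all add: add.commute)
  obtain z where z: "z \<in> T k" using T_nonempty[OF k(1)] by blast
  have "gr_act n k x + z \<in> T ((k + g) mod n)" using T_coc[OF k(1) h(1) h(2) z] .
  then have m: "gr_act n k x + z \<in> M" using k(2) T0_sub gr_elems_def
    by (metis T_props Fspan_el npos)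
  have "z + (- (gr_act n k x + z)) \<in> T k" using T_shift[OF k(1) z Mneg[OF m]] .
  then have y: "- gr_act n k x \<in> T k" by simp
  have xe: "x \<in> gr_elems n" using T_props[OF h] Fspan_el by blast
  have "gr_act n g (- gr_act n k x) + x = 0"
    using gr_act_comp[OF npos, of g k x] gr_act_mod[of n "k + g" x] k(2) gr_act_0[OF xe]
    by (simp add: gr_act_minus)
  then have "(k, - gr_act n k x) \<otimes>\<^bsub>Crys n M T\<^esub> a = \<one>\<^bsub>Crys n M T\<^esub>"
    unfolding ax crys_mult crys_one using k by simp
  moreover have "(k, - gr_act n k x) \<in> carrier (Crys n M T)" using carrier_iff k y by simp
  ultimately show "\<exists>y\<in>carrier (Crys n M T). y \<otimes>\<^bsub>Crys n M T\<^esub> a = \<one>\<^bsub>Crys n M T\<^esub>" by blast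
qed

end

lemma gr_elems_diff: "x \<in> gr_elems n \<Longrightarrow> y \<in> gr_elems n \<Longrightarrow> x - y \<in> gr_elems n"
  by (simp add: gr_elems_def)

theorem lemma9:
  fixes p :: nat and i :: nat and K :: "'f::field set"
    and T :: "nat \<Rightarrow> (nat \<Rightarrow> 'f) set"
  assumes "prime p"
    and "is_Zloc_in p K \<or> is_Zp_in p K"
    and "i \<le> p - 1"
    and "is_cocycle (p^2) (Ymod p K i) T"
  shows "\<exists>c \<in> carrier (Crys (p^2) (Ymod p K i) T). group.ord (Crys (p^2) (Ymod p K i) T) c = p"
proof -
  define n where "n = p^2"
  define M where "M = Ymod p K i"
  define G where "G = Crys n M T"
  have p1: "1 < p" using assms(1) prime_gt_1_nat by blast
  have nsq: "n = p * p" unfolding n_def by (simp add: power2_eq_square)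
  have pn: "p < n" unfolding nsq using p1 by simp
  have n0: "0 < n" using pn by simp
  have K: "subr K" using assms(2) Zloc_subr Zp_subr assms(1) by blast
  have MKG: "M \<subseteq> KG n K" unfolding M_def n_def using Ymod_KG[OF K] .
  interpret cs: crys_setup n M T
  proof
    show "0 < n" by (rule n0)
    show "0 \<in> M" unfolding M_def by (rule Ymod_zero[OF K])
    show "\<And>a b. a \<in> M \<Longrightarrow> b \<in> M \<Longrightarrow> a + b \<in> M" unfolding M_def by (rule Ymod_add[OF K])
    show "\<And>a. a \<in> M \<Longrightarrow> - a \<in> M" unfolding M_def by (rule Ymod_neg[OF K])
    show "\<And>a. a \<in> M \<Longrightarrow> a \<in> gr_elems n" using MKG unfolding KG_def by blast
    show "is_cocycle n M T" unfolding n_def M_def by (rule assms(4))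
  qed
  have grp: "group G" unfolding G_def by (rule cs.crys_group)
  obtain w where w: "w \<in> T 1" using cs.T_nonempty[of 1] p1 pn by auto
  have we: "w \<in> gr_elems n" using cs.T_props[of 1 w] w p1 pn cs.Fspan_el by auto
  define S where "S k = (\<Sum>t<k. gr_act n t w)" for k
  have Sind: "S (Suc k) \<in> T (Suc k mod n)" for k
  proof (induction k)
    case 0
    then show ?case using w gr_act_0[OF we] p1 pn by (simp add: S_def)
  next
    case (Suc k)
    have "S (Suc (Suc k)) = gr_act n 0 w + (\<Sum>t<Suc k. gr_act n (Suc t) w)"
      unfolding S_def by (rule sum.lessThan_Suc_shift)
    also have "(\<Sum>t<Suc k. gr_act n (Suc t) w) = gr_act n 1 (S (Suc k))"
      unfolding S_def gr_act_sum by (rule sum.cong[OF refl]) (simp add: gr_act_comp[OF n0])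
    also have "gr_act n 0 w + gr_act n 1 (S (Suc k)) = gr_act n 1 (S (Suc k)) + w"
      using gr_act_0[OF we] by (simp add: add.commute)
    finally have eq: "S (Suc (Suc k)) = gr_act n 1 (S (Suc k)) + w" .
    have "gr_act n 1 (S (Suc k)) + w \<in> T ((1 + Suc k mod n) mod n)"
      by (rule cs.T_coc) (use Suc w p1 pn n0 in auto)
    moreover have "(1 + Suc k mod n) mod n = Suc (Suc k) mod n" by (simp add: mod_simps)
    ultimately show ?case using eq by metis
  qed
  have Sp: "S p \<in> T p" using Sind[of "p - 1"] p1 pn by simp
  have Sn: "S n \<in> T 0" using Sind[of "n - 1"] n0 by simp
  have Sne: "S n \<in> gr_elems n" unfolding S_def by (rule gr_elems_sum) (rule gr_act_in)
  have SnM: "S n \<in> M" using cs.T0_sub[OF Sn Sne] .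
  define cc where "cc = (\<Sum>s<n. w s)"
  have Sn0: "S n 0 = cc" unfolding S_def cc_def using gr_act_N[of n w 0] n0 by simp
  have ccK: "cc \<in> K" using SnM MKG Sn0 unfolding KG_def by force
  define m :: "nat \<Rightarrow> 'f" where "m = (\<lambda>j. if j < p then cc else 0)"
  define e :: "nat \<Rightarrow> 'f" where "e = (\<lambda>j. if j = 0 then cc else 0)"
  have mM: "m \<in> M" unfolding m_def M_def using m_in_Ymod[OF K p1 ccK] .
  have me: "m = (\<Sum>l<p. gr_act n l e)"
  proof (rule ext)
    fix t
    have "(\<Sum>l<p. gr_act n l e) t = (\<Sum>l<p. if t < n then e ((t + n - l mod n) mod n) else 0)"
      by (simp add: sum_fun_apply gr_act_def)
    also have "\<dots> = (\<Sum>l<p. if t = l then cc else 0)"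
    proof (rule sum.cong[OF refl])
      fix l assume l: "l \<in> {..<p}"
      then have ln: "l < n" using pn by simp
      show "(if t < n then e ((t + n - l mod n) mod n) else 0) = (if t = l then cc else 0)"
      proof (cases "t < n")
        case True
        then show ?thesis using modC[OF True ln] ln by (simp add: e_def)
      next
        case False
        then show ?thesis using ln by auto
      qed
    qed
    also have "\<dots> = m t" unfolding m_def by simp
    finally show "m t = (\<Sum>l<p. gr_act n l e) t" by simp
  qed
  define x where "x = S p - m"
  have xT: "x \<in> T p" using cs.T_shift[OF pn Sp cs.Mneg[OF mM]] unfolding x_def by simp
  have xsum: "x = (\<Sum>l<p. gr_act n l (w - e))"
    unfolding x_def S_def me by (simp add: gr_act_diff sum_subtractf)
  have xe: "x \<in> gr_elems n" unfolding xsum by (rule gr_elems_sum) (rule gr_act_in)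
  define c where "c = (p, x)"
  have cC: "c \<in> carrier G" unfolding c_def G_def using cs.carrier_iff xT pn by simp
  have pw: "c [^]\<^bsub>G\<^esub> k = ((k * p) mod n, \<Sum>j<k. gr_act n (j * p) x)" for k
  proof (induction k)
    case 0
    then show ?case unfolding G_def by (simp add: cs.crys_one zero_fun_def)
  next
    case (Suc k)
    have "c [^]\<^bsub>G\<^esub> Suc k = ((k * p) mod n, \<Sum>j<k. gr_act n (j * p) x) \<otimes>\<^bsub>G\<^esub> (p, x)"
      using Suc by (simp add: c_def)
    also have "\<dots> = (((k * p) mod n + p) mod n, gr_act n p (\<Sum>j<k. gr_act n (j * p) x) + x)"
      unfolding G_def by (rule cs.crys_mult)
    also have "((k * p) mod n + p) mod n = (Suc k * p) mod n" by (simp add: mod_simps add.commute)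
    also have "gr_act n p (\<Sum>j<k. gr_act n (j * p) x) + x = (\<Sum>j<Suc k. gr_act n (j * p) x)"
    proof -
      have "(\<Sum>j<Suc k. gr_act n (j * p) x) = gr_act n (0 * p) x + (\<Sum>j<k. gr_act n (Suc j * p) x)"
        by (rule sum.lessThan_Suc_shift)
      also have "(\<Sum>j<k. gr_act n (Suc j * p) x) = gr_act n p (\<Sum>j<k. gr_act n (j * p) x)"
        unfolding gr_act_sum by (rule sum.cong[OF refl]) (simp add: gr_act_comp[OF n0] add.commute)
      finally have f: "(\<Sum>j<Suc k. gr_act n (j * p) x) = gr_act n (0 * p) x + gr_act n p (\<Sum>j<k. gr_act n (j * p) x)" .
      have "gr_act n (0 * p) x = x" using gr_act_0[OF xe] by simp
      then show ?thesis using f by (metis add.commute)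
    qed
    finally show ?case .
  qed
  have we2: "(\<Sum>s<n. (w - e) s) = 0"
  proof -
    have "(\<Sum>s<n. e s) = cc" unfolding e_def using n0 by simp
    then show ?thesis by (simp add: sum_subtractf cc_def)
  qed
  have cp: "c [^]\<^bsub>G\<^esub> p = \<one>\<^bsub>G\<^esub>"
  proof -
    have "(\<Sum>j<p. gr_act n (j * p) x) = (\<Sum>t<p*p. gr_act (p*p) t (w - e))"
      unfolding xsum nsq using p1 by (intro block_sum) simp
    also have "\<dots> = 0" using gr_act_N[of "p*p" "w - e"] we2 nsq by (auto simp: fun_eq_iff)
    finally show ?thesis using pw[of p] unfolding G_def by (simp add: Crys_def nsq)
  qed
  have "group.ord G c = p"
  proof -
    have "(c [^]\<^bsub>G\<^esub> k = \<one>\<^bsub>G\<^esub>) = (p dvd k)" for k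
    proof
      assume h: "c [^]\<^bsub>G\<^esub> k = \<one>\<^bsub>G\<^esub>"
      then have "(k * p) mod (p * p) = 0" using pw[of k] unfolding G_def by (simp add: Crys_def nsq)
      then have "p * p dvd k * p" by auto
      then show "p dvd k" using p1 by simp
    next
      assume "p dvd k"
      then obtain q where "k = p * q" by blast
      then have "c [^]\<^bsub>G\<^esub> k = (c [^]\<^bsub>G\<^esub> p) [^]\<^bsub>G\<^esub> q" using monoid.nat_pow_pow[OF group.is_monoid[OF grp] cC] by simp
      then show "c [^]\<^bsub>G\<^esub> k = \<one>\<^bsub>G\<^esub>" using cp monoid.nat_pow_one[OF group.is_monoid[OF grp]] by simp
    qed
    then show ?thesis using group.ord_unique[OF grp cC] by blast
  qed
  then show ?thesis using cC unfolding G_def M_def n_def by blast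
qed

end
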